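(* Let $X$ be a connected, locally path connected space and $H\le\pi_1(X,x_0)$. Then $X$ is semilocally path $H$-connected if and only if $H$ is an open subgroup of $\pi_1^{qtop}(X,x_0)$.
   Context: $X$ is semilocally path $H$-connected if for every path $\alpha$ starting at $x_0$ there is an open neighborhood $U_\alpha$ of $\alpha(1)$ with $i_*\pi_1(U_\alpha,\alpha(1))\le[\alpha^{-1}H\alpha]$, where $[\alpha^{-1}H\alpha]=\{[\alpha^{-1}*\gamma*\alpha]:[\gamma]\in H\}\le\pi_1(X,\alpha(1))$ and $i$ is inclusion. $\pi_1^{qtop}(X,x_0)$ is $\pi_1(X,x_0)$ with the quotient topology induced from the compact-open topology on the space of loops at $x_0$. *)

theory Defs
  imports "HOL-Analysis.Analysis" "HOL-Algebra.Group"
begin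

text \<open>Concatenation (first alpha, then beta)
and reversal, as in the library's joinpaths/reversepath, but for arbitrary carrier types.\<close>

definition path_join :: "(real \<Rightarrow> 'a) \<Rightarrow> (real \<Rightarrow> 'a) \<Rightarrow> real \<Rightarrow> 'a"  (infixr \<open>\<star>\<close> 75)
  where "g1 \<star> g2 = (\<lambda>x. if x \<le> 1/2 then g1 (2 * x) else g2 (2 * x - 1))"

definition path_rev :: "(real \<Rightarrow> 'a) \<Rightarrow> real \<Rightarrow> 'a"
  where "path_rev g = (\<lambda>x. g (1 - x))"

definition path_homotopic :: "'a topology \<Rightarrow> (real \<Rightarrow> 'a) \<Rightarrow> (real \<Rightarrow> 'a) \<Rightarrow> bool"
  where "path_homotopic X p q \<longleftrightarrow>
     homotopic_with (\<lambda>r. r 0 = p 0 \<and> r 1 = p 1) (top_of_set {0..1::real}) X p q"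

definition path_class :: "'a topology \<Rightarrow> (real \<Rightarrow> 'a) \<Rightarrow> (real \<Rightarrow> 'a) set"
  where "path_class X p = {q. path_homotopic X p q}"

definition loops :: "'a topology \<Rightarrow> 'a \<Rightarrow> (real \<Rightarrow> 'a) set"
  where "loops X x0 = {g. pathin X g \<and> g 0 = x0 \<and> g 1 = x0}"

definition pi1 :: "'a topology \<Rightarrow> 'a \<Rightarrow> (real \<Rightarrow> 'a) set set"
  where "pi1 X x0 = path_class X ` loops X x0"

definition fundamental_group :: "'a topology \<Rightarrow> 'a \<Rightarrow> (real \<Rightarrow> 'a) set monoid"
  where "fundamental_group X x0 =
    \<lparr> carrier = pi1 X x0,
      mult = (\<lambda>A B. path_class X ((SOME a. a \<in> A) \<star> (SOME b. b \<in> B))),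
      one = path_class X (\<lambda>_. x0) \<rparr>"

definition compact_open_loops :: "'a topology \<Rightarrow> 'a \<Rightarrow> (real \<Rightarrow> 'a) topology"
  where "compact_open_loops X x0 = topology_generated_by
     {{g \<in> loops X x0. g ` K \<subseteq> U} | K U. compact K \<and> K \<subseteq> {0..1} \<and> openin X U}"

definition pi1_qtop :: "'a topology \<Rightarrow> 'a \<Rightarrow> (real \<Rightarrow> 'a) set topology"
  where "pi1_qtop X x0 = topology
     (\<lambda>A. A \<subseteq> pi1 X x0 \<and> openin (compact_open_loops X x0) {g \<in> loops X x0. path_class X g \<in> A})"

definition semilocally_path_H_connected :: "'a topology \<Rightarrow> 'a \<Rightarrow> (real \<Rightarrow> 'a) set set \<Rightarrow> bool"
  where "semilocally_path_H_connected X x0 H \<longleftrightarrow>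
    (\<forall>\<alpha>. pathin X \<alpha> \<and> \<alpha> 0 = x0 \<longrightarrow>
      (\<exists>U. openin X U \<and> \<alpha> 1 \<in> U \<and>
        (\<forall>\<gamma>. pathin (subtopology X U) \<gamma> \<and> \<gamma> 0 = \<alpha> 1 \<and> \<gamma> 1 = \<alpha> 1 \<longrightarrow>
          (\<exists>\<delta>\<in>loops X x0. path_class X \<delta> \<in> H \<and>
             path_class X \<gamma> = path_class X (path_rev \<alpha> \<star> (\<delta> \<star> \<alpha>))))))"

end

theory Submission
  imports Defs
begin

definition sp :: "real \<Rightarrow> real \<Rightarrow> (real \<Rightarrow> 'a) \<Rightarrow> real \<Rightarrow> 'a"
  where "sp a b f = (\<lambda>x. f ((b - a) * x + a))"

lemma conv01: "(a::real) \<in> {0..1} \<Longrightarrow> b \<in> {0..1} \<Longrightarrow> s \<in> {0..1} \<Longrightarrow> (1 - s) * a + s * b \<in> {0..1}"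
proof -
  assume a: "a \<in> {0..1}" and b: "b \<in> {0..1}" and s: "s \<in> {0..1}"
  have "(1 - s) * a \<le> (1 - s) * 1" using a s by (intro mult_left_mono) auto
  moreover have "s * b \<le> s * 1" using b s by (intro mult_left_mono) auto
  moreover have "0 \<le> (1 - s) * a" "0 \<le> s * b" using a b s by auto
  ultimately show ?thesis by auto
qed

lemma pathin_reparam:
  assumes "pathin X p" "continuous_on S h" "h \<in> S \<rightarrow> {0..1}"
  shows "continuous_map (top_of_set S) X (p \<circ> h)"
  using assms unfolding pathin_def
  by (metis continuous_map_compose continuous_map_subtopology_eu)

lemma pathin_comp:
  assumes "pathin X p" "continuous_on {0..1} h" "h \<in> {0..1} \<rightarrow> {0..1}"
  shows "pathin X (p \<circ> h)"
  using pathin_reparam[OF assms] by (simp add: pathin_def)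

lemma pathin_cong01: "pathin X p \<Longrightarrow> (\<And>x. x \<in> {0..1} \<Longrightarrow> q x = p x) \<Longrightarrow> pathin X q"
  unfolding pathin_def by (metis continuous_map_eq topspace_euclidean_subtopology)

lemma join_eq_comp:
  "(p \<star> q) = (\<lambda>x. if x \<le> 1/2 then p (2*x) else q (2*x-1))"
  by (simp add: path_join_def)

lemma pathin_join:
  assumes p: "pathin X p" and q: "pathin X q" and e: "p 1 = q 0"
  shows "pathin X (p \<star> q)"
proof -
  have "continuous_map (top_of_set {0..1}) X
      (\<lambda>x. if x \<le> 1/2 then (p \<circ> (\<lambda>x. 2*x)) x else (q \<circ> (\<lambda>x. 2*x-1)) x)"
  proof (rule continuous_map_cases_le)
    show "continuous_map (top_of_set {0..1}) euclideanreal (\<lambda>x. x)"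
      by (simp add: continuous_on_id)
    show "continuous_map (top_of_set {0..1}) euclideanreal (\<lambda>x. 1/2)"
      by simp
    have "continuous_map (top_of_set {x\<in>{0..1::real}. x \<le> 1/2}) X (p \<circ> (\<lambda>x. 2*x))"
      by (rule pathin_reparam[OF p]) (auto intro!: continuous_intros)
    moreover have "{0..1} \<inter> {x \<in> topspace (top_of_set {0..1}). x \<le> 1/2} = {x\<in>{0..1::real}. x \<le> 1/2}" by auto
    ultimately show "continuous_map (subtopology (top_of_set {0..1}) {x \<in> topspace (top_of_set {0..1}). x \<le> 1/2}) X (p \<circ> (\<lambda>x. 2*x))"
      by (simp only: subtopology_subtopology)
    have "continuous_map (top_of_set {x\<in>{0..1::real}. 1/2 \<le> x}) X (q \<circ> (\<lambda>x. 2*x-1))"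
      by (rule pathin_reparam[OF q]) (auto intro!: continuous_intros)
    moreover have "{0..1} \<inter> {x \<in> topspace (top_of_set {0..1}). 1/2 \<le> x} = {x\<in>{0..1::real}. 1/2 \<le> x}" by auto
    ultimately show "continuous_map (subtopology (top_of_set {0..1}) {x \<in> topspace (top_of_set {0..1}). 1/2 \<le> x}) X (q \<circ> (\<lambda>x. 2*x-1))"
      by (simp only: subtopology_subtopology)
  next
    fix x assume "x \<in> topspace (top_of_set {0..1::real})" "x = 1/2"
    then have "2*x = 1" "2*x-1 = 0" by simp_all
    then show "(p \<circ> (\<lambda>x. 2*x)) x = (q \<circ> (\<lambda>x. 2*x-1)) x" using e by (simp only: o_def)
  qed
  then show ?thesis unfolding pathin_def path_join_def o_def by simp
qed

lemma pathin_rev: "pathin X p \<Longrightarrow> pathin X (path_rev p)"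
proof -
  assume p: "pathin X p"
  have "continuous_on {0..1} (\<lambda>x::real. 1 - x)" by (intro continuous_intros)
  from pathin_comp[OF p this] show ?thesis by (auto simp: o_def path_rev_def)
qed

lemma pathin_sp: "pathin X p \<Longrightarrow> a \<in> {0..1} \<Longrightarrow> b \<in> {0..1} \<Longrightarrow> pathin X (sp a b p)"
proof -
  assume p: "pathin X p" and ab: "a \<in> {0..1}" "b \<in> {0..1}"
  have "continuous_on {0..1} (\<lambda>x::real. (b - a) * x + a)" by (intro continuous_intros)
  moreover have "(\<lambda>x::real. (b - a) * x + a) \<in> {0..1} \<rightarrow> {0..1}"
  proof
    fix x :: real assume "x \<in> {0..1}"
    from conv01[OF ab this] show "(b - a) * x + a \<in> {0..1}" by (simp add: algebra_simps)
  qed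
  ultimately show ?thesis using pathin_comp[OF p] by (simp add: sp_def o_def)
qed

lemma join_0[simp]: "(p \<star> q) 0 = p 0" and join_1[simp]: "(p \<star> q) 1 = q 1"
  by (simp_all add: path_join_def)
lemma rev_0[simp]: "path_rev p 0 = p 1" and rev_1[simp]: "path_rev p 1 = p 0"
  by (simp_all add: path_rev_def)
lemma sp_0[simp]: "sp a b p 0 = p a" and sp_1[simp]: "sp a b p 1 = p b"
  by (simp_all add: sp_def)
lemma rev_rev[simp]: "path_rev (path_rev p) = p"
  by (simp add: path_rev_def)
lemma rev_sp[simp]: "path_rev (sp a b p) = sp b a p"
  by (auto simp: path_rev_def sp_def algebra_simps)
lemma sp_same[simp]: "sp a a p = (\<lambda>x. p a)"
  by (simp add: sp_def)
lemma sp_01[simp]: "sp 0 1 p = p"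
  by (simp add: sp_def)
lemma rev_const[simp]: "path_rev (\<lambda>x. a) = (\<lambda>x. a)"
  by (simp add: path_rev_def)

lemma ph_imp:
  assumes "path_homotopic X p q"
  shows "pathin X p" "pathin X q" "q 0 = p 0" "q 1 = p 1"
proof -
  have h: "homotopic_with (\<lambda>r. r 0 = p 0 \<and> r 1 = p 1) (top_of_set {0..1}) X p q"
    using assms by (simp add: path_homotopic_def)
  show "pathin X p" "pathin X q"
    using homotopic_with_imp_continuous_maps[OF h] by (auto simp: pathin_def)
  show "q 0 = p 0" "q 1 = p 1"
    using homotopic_with_imp_property[OF h] by auto
qed

lemma ph_refl: "pathin X p \<Longrightarrow> path_homotopic X p p"
  by (simp add: path_homotopic_def pathin_def)

lemma ph_sym: "path_homotopic X p q \<Longrightarrow> path_homotopic X q p"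
proof -
  assume a: "path_homotopic X p q"
  note e = ph_imp[OF a]
  show ?thesis using a unfolding path_homotopic_def e(3,4)
    by (simp add: homotopic_with_sym)
qed

lemma ph_trans: "path_homotopic X p q \<Longrightarrow> path_homotopic X q r \<Longrightarrow> path_homotopic X p r"
proof -
  assume a: "path_homotopic X p q" and b: "path_homotopic X q r"
  note e = ph_imp[OF a]
  from b have "homotopic_with (\<lambda>r. r 0 = p 0 \<and> r 1 = p 1) (top_of_set {0..1}) X q r"
    unfolding path_homotopic_def e(3,4) .
  with a show ?thesis unfolding path_homotopic_def by (rule homotopic_with_trans)
qed

lemma ph_cong_on:
  assumes h: "path_homotopic X p q"
    and p': "\<And>x. x \<in> {0..1} \<Longrightarrow> p' x = p x" and q': "\<And>x. x \<in> {0..1} \<Longrightarrow> q' x = q x"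
  shows "path_homotopic X p' q'"
proof -
  have e: "p' 0 = p 0" "p' 1 = p 1" using p' by auto
  show ?thesis using h unfolding path_homotopic_def e
    by (rule homotopic_with_eq) (use p' q' in auto)
qed

lemma mem_pc: "r \<in> path_class X p \<longleftrightarrow> path_homotopic X p r"
  by (simp add: path_class_def)

lemma pc_eq: "path_homotopic X p q \<Longrightarrow> path_class X p = path_class X q"
  unfolding path_class_def using ph_sym ph_trans by blast

lemma pc_eqD: "pathin X p \<Longrightarrow> path_class X p = path_class X q \<Longrightarrow> path_homotopic X p q"
  by (metis mem_pc ph_refl ph_sym)

lemma ph_reparam:
  assumes p: "pathin X p" and h: "continuous_on {0..1} h" "h \<in> {0..1} \<rightarrow> {0..1}"
   and k: "continuous_on {0..1} k" "k \<in> {0..1} \<rightarrow> {0..1}" and e: "h 0 = k 0" "h 1 = k 1"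
  shows "path_homotopic X (p \<circ> h) (p \<circ> k)"
proof -
  let ?F = "\<lambda>z::real\<times>real. (1 - fst z) * h (snd z) + fst z * k (snd z)"
  have c: "continuous_on ({0..1}\<times>{0..1}) ?F"
    by (intro continuous_intros continuous_on_compose2[OF h(1)] continuous_on_compose2[OF k(1)]) auto
  have i: "?F \<in> ({0..1}\<times>{0..1}) \<rightarrow> {0..1}"
    using h(2) k(2) conv01 by (auto simp: Pi_iff)
  have cm: "continuous_map (top_of_set ({0..1}\<times>{0..1})) X (p \<circ> ?F)"
    by (rule pathin_reparam[OF p c i])
  have e2: "\<And>t. (1 - t) * h 0 + t * k 0 = h 0" "\<And>t. (1 - t) * h 1 + t * k 1 = h 1"
    using e by (auto simp: algebra_simps)
  show ?thesis
    unfolding path_homotopic_def homotopic_with_def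
    apply (rule exI[where x="p \<circ> ?F"])
    using cm e2 by simp
qed
lemma ph_reparam':
  assumes p: "pathin X p" and h: "continuous_on {0..1} h" "h \<in> {0..1} \<rightarrow> {0..1}"
   and k: "continuous_on {0..1} k" "k \<in> {0..1} \<rightarrow> {0..1}" and e: "h 0 = k 0" "h 1 = k 1"
   and q: "\<And>x. x \<in> {0..1} \<Longrightarrow> q x = p (h x)" and r: "\<And>x. x \<in> {0..1} \<Longrightarrow> r x = p (k x)"
  shows "path_homotopic X q r"
  using ph_cong_on[OF ph_reparam[OF assms(1-7)]] q r by auto

lemma ph_join_cong:
  assumes hp: "path_homotopic X p p'" and hq: "path_homotopic X q q'" and e: "p 1 = q 0"
  shows "path_homotopic X (p \<star> q) (p' \<star> q')"
proof -
  let ?S = "{0..1::real} \<times> {0..1::real}"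
  obtain Hp where Hp: "continuous_map (top_of_set ?S) X Hp" "\<And>x. Hp (0, x) = p x" "\<And>x. Hp (1, x) = p' x"
      "\<And>t. t \<in> {0..1} \<Longrightarrow> Hp (t, 0) = p 0 \<and> Hp (t, 1) = p 1"
    using hp unfolding path_homotopic_def homotopic_with_def by auto
  obtain Hq where Hq: "continuous_map (top_of_set ?S) X Hq" "\<And>x. Hq (0, x) = q x" "\<And>x. Hq (1, x) = q' x"
      "\<And>t. t \<in> {0..1} \<Longrightarrow> Hq (t, 0) = q 0 \<and> Hq (t, 1) = q 1"
    using hq unfolding path_homotopic_def homotopic_with_def by auto
  let ?K = "\<lambda>z. if snd z \<le> 1/2 then (Hp \<circ> (\<lambda>z. (fst z, 2 * snd z))) z else (Hq \<circ> (\<lambda>z. (fst z, 2 * snd z - 1))) z"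
  have cK: "continuous_map (top_of_set ?S) X ?K"
  proof (rule continuous_map_cases_le)
    show "continuous_map (top_of_set ?S) euclideanreal snd"
      by (simp add: continuous_on_snd)
    show "continuous_map (top_of_set ?S) euclideanreal (\<lambda>x. 1/2)"
      by simp
    have "continuous_map (top_of_set {z\<in>?S. snd z \<le> 1/2}) (top_of_set ?S) (\<lambda>z. (fst z, 2 * snd z))"
      by (auto simp: continuous_map_subtopology_eu intro!: continuous_intros)
    from continuous_map_compose[OF this Hp(1)]
    have "continuous_map (top_of_set {z\<in>?S. snd z \<le> 1/2}) X (Hp \<circ> (\<lambda>z. (fst z, 2 * snd z)))" .
    moreover have "?S \<inter> {x \<in> topspace (top_of_set ?S). snd x \<le> 1/2} = {z\<in>?S. snd z \<le> 1/2}" by auto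
    ultimately show "continuous_map (subtopology (top_of_set ?S) {x \<in> topspace (top_of_set ?S). snd x \<le> 1/2}) X (Hp \<circ> (\<lambda>z. (fst z, 2 * snd z)))"
      by (simp only: subtopology_subtopology)
    have "continuous_map (top_of_set {z\<in>?S. 1/2 \<le> snd z}) (top_of_set ?S) (\<lambda>z. (fst z, 2 * snd z - 1))"
      by (auto simp: continuous_map_subtopology_eu intro!: continuous_intros)
    from continuous_map_compose[OF this Hq(1)]
    have "continuous_map (top_of_set {z\<in>?S. 1/2 \<le> snd z}) X (Hq \<circ> (\<lambda>z. (fst z, 2 * snd z - 1)))" .
    moreover have "?S \<inter> {x \<in> topspace (top_of_set ?S). 1/2 \<le> snd x} = {z\<in>?S. 1/2 \<le> snd z}" by auto
    ultimately show "continuous_map (subtopology (top_of_set ?S) {x \<in> topspace (top_of_set ?S). 1/2 \<le> snd x}) X (Hq \<circ> (\<lambda>z. (fst z, 2 * snd z - 1)))"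
      by (simp only: subtopology_subtopology)
  next
    fix z assume z: "z \<in> topspace (top_of_set ?S)" "snd z = 1/2"
    then have "2 * snd z = 1" "2 * snd z - 1 = 0" "fst z \<in> {0..1}" by auto
    then show "(Hp \<circ> (\<lambda>z. (fst z, 2 * snd z))) z = (Hq \<circ> (\<lambda>z. (fst z, 2 * snd z - 1))) z"
      using Hp(4) Hq(4) e by (simp only: o_def)
  qed
  show ?thesis
    unfolding path_homotopic_def homotopic_with_def
    apply (rule exI[where x="?K"])
    using cK Hp(2,3,4) Hq(2,3,4) by (auto simp: path_join_def)
qed

lemma ph_assoc:
  assumes p: "pathin X p" and q: "pathin X q" and r: "pathin X r" and e: "p 1 = q 0" "q 1 = r 0"
  shows "path_homotopic X ((p \<star> q) \<star> r) (p \<star> (q \<star> r))"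
proof (rule ph_reparam'[where p="p \<star> (q \<star> r)" and h="\<lambda>x. min (2*x) (min (x+1/4) ((x+1)/2))" and k="\<lambda>x. x"])
  show "pathin X (p \<star> (q \<star> r))" using p q r e by (simp add: pathin_join)
  show "continuous_on {0..1} (\<lambda>x::real. min (2*x) (min (x+1/4) ((x+1)/2)))"
    by (intro continuous_intros) auto
  show "(\<lambda>x::real. min (2*x) (min (x+1/4) ((x+1)/2))) \<in> {0..1} \<rightarrow> {0..1}" by (auto simp: min_le_iff_disj)
  show "continuous_on {0..1} (\<lambda>x::real. x)" by (intro continuous_intros)
  fix x :: real assume x: "x \<in> {0..1}"
  show "((p \<star> q) \<star> r) x = (p \<star> (q \<star> r)) (min (2*x) (min (x+1/4) ((x+1)/2)))"
  proof (cases "x \<le> 1/4")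
    case True then show ?thesis by (simp add: path_join_def min_def)
  next
    case f1: False
    show ?thesis
    proof (cases "x \<le> 1/2")
      case True
      have "min (2*x) (min (x+1/4) ((x+1)/2)) = x + 1/4" using True f1 by (simp add: min_def)
      moreover have "2 * (2 * x) - 1 = 2 * (2 * (x + 1/4) - 1)" by (simp add: algebra_simps)
      ultimately show ?thesis using True f1 by (simp add: path_join_def)
    next
      case False
      have "min (2*x) (min (x+1/4) ((x+1)/2)) = (x + 1)/2" using False f1 by (simp add: min_def)
      moreover have "True" by simp
      ultimately show ?thesis using False f1 by (simp add: path_join_def) (rule arg_cong[where f=r], simp add: field_simps)
    qed
  qed
qed (auto simp: path_join_def)

lemma ph_rinv:
  assumes p: "pathin X p"
  shows "path_homotopic X (p \<star> path_rev p) (\<lambda>x. p 0)"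
proof (rule ph_reparam'[where p="p" and h="\<lambda>x. min (2*x) (2 - 2*x)" and k="\<lambda>x. 0"])
  show "continuous_on {0..1} (\<lambda>x::real. min (2*x) (2-2*x))"
    by (intro continuous_intros)
  show "(\<lambda>x::real. min (2*x) (2-2*x)) \<in> {0..1} \<rightarrow> {0..1}" by auto
  fix x :: real assume x: "x \<in> {0..1}"
  show "(p \<star> path_rev p) x = p (min (2*x) (2-2*x))"
    by (auto simp: path_join_def path_rev_def min_def algebra_simps)
qed (auto simp: p)

lemma ph_linv:
  assumes p: "pathin X p"
  shows "path_homotopic X (path_rev p \<star> p) (\<lambda>x. p 1)"
proof (rule ph_reparam'[where p="p" and h="\<lambda>x. max (1 - 2*x) (2*x - 1)" and k="\<lambda>x. 1"])
  show "continuous_on {0..1} (\<lambda>x::real. max (1 - 2*x) (2*x - 1))"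
    by (intro continuous_intros)
  show "(\<lambda>x::real. max (1 - 2*x) (2*x - 1)) \<in> {0..1} \<rightarrow> {0..1}" by auto
  fix x :: real assume x: "x \<in> {0..1}"
  show "(path_rev p \<star> p) x = p (max (1 - 2*x) (2*x - 1))"
    by (auto simp: path_join_def path_rev_def max_def algebra_simps)
qed (auto simp: p)

lemma ph_lid:
  assumes p: "pathin X p" and a: "a = p 0"
  shows "path_homotopic X ((\<lambda>x. a) \<star> p) p"
proof (rule ph_reparam'[where p="p" and h="\<lambda>x. max 0 (2*x - 1)" and k="\<lambda>x. x"])
  show "continuous_on {0..1} (\<lambda>x::real. max 0 (2*x - 1))"
    by (intro continuous_intros)
  show "(\<lambda>x::real. max 0 (2*x - 1)) \<in> {0..1} \<rightarrow> {0..1}" by auto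
  fix x :: real assume x: "x \<in> {0..1}"
  show "((\<lambda>x. a) \<star> p) x = p (max 0 (2*x - 1))"
  proof (cases "x = 1/2")
    case True then show ?thesis unfolding True by (simp add: path_join_def a)
  qed (auto simp: path_join_def max_def a)
qed (auto simp: p intro: continuous_intros)

lemma ph_rid:
  assumes p: "pathin X p" and a: "a = p 1"
  shows "path_homotopic X (p \<star> (\<lambda>x. a)) p"
proof (rule ph_reparam'[where p="p" and h="\<lambda>x. min 1 (2*x)" and k="\<lambda>x. x"])
  show "continuous_on {0..1} (\<lambda>x::real. min 1 (2*x))"
    by (intro continuous_intros)
  show "(\<lambda>x::real. min 1 (2*x)) \<in> {0..1} \<rightarrow> {0..1}" by auto
  fix x :: real assume x: "x \<in> {0..1}"
  show "(p \<star> (\<lambda>x. a)) x = p (min 1 (2*x))"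
  proof (cases "x = 1/2")
    case True then show ?thesis unfolding True by (simp add: path_join_def a)
  qed (auto simp: path_join_def min_def a)
qed (auto simp: p intro: continuous_intros)

lemma ph_sp:
  assumes f: "pathin X f" and abc: "a \<in> {0..1}" "b \<in> {0..1}" "c \<in> {0..1}"
  shows "path_homotopic X (sp a b f \<star> sp b c f) (sp a c f)"
proof (rule ph_reparam'[where p="f" and h="\<lambda>x. a + (b - a) * min 1 (2*x) + (c - b) * max 0 (2*x - 1)" and k="\<lambda>x. a + (c - a) * x"])
  show "continuous_on {0..1} (\<lambda>x::real. a + (b - a) * min 1 (2*x) + (c - b) * max 0 (2*x - 1))"
    by (intro continuous_intros)
  show "continuous_on {0..1} (\<lambda>x::real. a + (c - a) * x)"
    by (intro continuous_intros)
  show "(\<lambda>x::real. a + (b - a) * min 1 (2*x) + (c - b) * max 0 (2*x - 1)) \<in> {0..1} \<rightarrow> {0..1}"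
  proof
    fix x :: real assume x: "x \<in> {0..1}"
    show "a + (b - a) * min 1 (2*x) + (c - b) * max 0 (2*x - 1) \<in> {0..1}"
    proof (cases "x \<le> 1/2")
      case True
      then have "a + (b - a) * min 1 (2*x) + (c - b) * max 0 (2*x - 1) = (1 - 2*x) * a + (2*x) * b"
        by (simp add: min_def max_def algebra_simps)
      then show ?thesis using conv01[OF abc(1,2), of "2*x"] x True by simp
    next
      case False
      then have "a + (b - a) * min 1 (2*x) + (c - b) * max 0 (2*x - 1) = (1 - (2*x-1)) * b + (2*x-1) * c"
        by (simp add: min_def max_def algebra_simps)
      then show ?thesis using conv01[OF abc(2,3), of "2*x-1"] x False by simp
    qed
  qed
  show "(\<lambda>x::real. a + (c - a) * x) \<in> {0..1} \<rightarrow> {0..1}"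
  proof
    fix x :: real assume x: "x \<in> {0..1}"
    show "a + (c - a) * x \<in> {0..1}" using conv01[OF abc(1,3) x] by (simp add: algebra_simps)
  qed
  fix x :: real assume x: "x \<in> {0..1}"
  show "(sp a b f \<star> sp b c f) x = f (a + (b - a) * min 1 (2*x) + (c - b) * max 0 (2*x - 1))"
    by (auto simp: path_join_def sp_def min_def max_def algebra_simps)
  show "sp a c f x = f (a + (c - a) * x)" by (simp add: sp_def algebra_simps)
qed (auto simp: f)

definition cmul :: "'a topology \<Rightarrow> (real \<Rightarrow> 'a) set \<Rightarrow> (real \<Rightarrow> 'a) set \<Rightarrow> (real \<Rightarrow> 'a) set"
  where "cmul X A B = path_class X ((SOME a. a \<in> A) \<star> (SOME b. b \<in> B))"
definition is_cls :: "'a topology \<Rightarrow> (real \<Rightarrow> 'a) set \<Rightarrow> bool"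
  where "is_cls X A \<longleftrightarrow> (\<exists>p. pathin X p \<and> A = path_class X p)"
definition src :: "(real \<Rightarrow> 'a) set \<Rightarrow> 'a" where "src A = (SOME a. a \<in> A) 0"
definition tgt :: "(real \<Rightarrow> 'a) set \<Rightarrow> 'a" where "tgt A = (SOME a. a \<in> A) 1"

lemma some_pc: "pathin X p \<Longrightarrow> path_homotopic X p (SOME a. a \<in> path_class X p)"
  by (metis mem_pc ph_refl someI)

lemma src_pc[simp]: "pathin X p \<Longrightarrow> src (path_class X p) = p 0"
  using ph_imp(3)[OF some_pc] by (simp add: src_def)
lemma tgt_pc[simp]: "pathin X p \<Longrightarrow> tgt (path_class X p) = p 1"
  using ph_imp(4)[OF some_pc] by (simp add: tgt_def)
lemma is_cls_pc[simp]: "pathin X p \<Longrightarrow> is_cls X (path_class X p)"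
  by (auto simp: is_cls_def)

lemma pc_join: "pathin X p \<Longrightarrow> pathin X q \<Longrightarrow> p 1 = q 0 \<Longrightarrow>
   path_class X (p \<star> q) = cmul X (path_class X p) (path_class X q)"
  unfolding cmul_def by (intro pc_eq ph_join_cong some_pc)

lemma is_clsE: "is_cls X A \<Longrightarrow> (\<And>p. pathin X p \<Longrightarrow> A = path_class X p \<Longrightarrow> P) \<Longrightarrow> P"
  by (auto simp: is_cls_def)

lemma cmul_props:
  assumes "is_cls X A" "is_cls X B" "tgt A = src B"
  shows "is_cls X (cmul X A B)" "src (cmul X A B) = src A" "tgt (cmul X A B) = tgt B"
proof -
  obtain p q where p: "pathin X p" "A = path_class X p" and q: "pathin X q" "B = path_class X q"
    using assms(1,2) by (auto simp: is_cls_def)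
  have e: "p 1 = q 0" using assms(3) p q by simp
  have c: "cmul X A B = path_class X (p \<star> q)" using pc_join[OF p(1) q(1) e] p q by simp
  have pq: "pathin X (p \<star> q)" using p q e by (simp add: pathin_join)
  show "is_cls X (cmul X A B)" "src (cmul X A B) = src A" "tgt (cmul X A B) = tgt B"
    using c pq p q by auto
qed

lemmas [simp] = cmul_props pathin_join pathin_rev pathin_sp

lemma cmul_assoc[simp]:
  assumes "is_cls X A" "is_cls X B" "is_cls X C" "tgt A = src B" "tgt B = src C"
  shows "cmul X (cmul X A B) C = cmul X A (cmul X B C)"
proof -
  obtain p q r where p: "pathin X p" "A = path_class X p" and q: "pathin X q" "B = path_class X q"
     and r: "pathin X r" "C = path_class X r"
    using assms(1,2,3) by (auto simp: is_cls_def)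
  have e: "p 1 = q 0" "q 1 = r 0" using assms(4,5) p q r by auto
  have "cmul X (cmul X A B) C = path_class X ((p \<star> q) \<star> r)"
    using p q r e by (simp add: pc_join)
  also have "\<dots> = path_class X (p \<star> (q \<star> r))"
    by (rule pc_eq, rule ph_assoc) (use p q r e in auto)
  also have "\<dots> = cmul X A (cmul X B C)"
    using p q r e by (simp add: pc_join)
  finally show ?thesis .
qed

lemma c_rinv[simp]: "pathin X p \<Longrightarrow> cmul X (path_class X p) (path_class X (path_rev p)) = path_class X (\<lambda>x. p 0)"
  by (simp only: pc_join[symmetric] pathin_rev rev_0) (rule pc_eq, rule ph_rinv)
lemma c_linv[simp]: "pathin X p \<Longrightarrow> cmul X (path_class X (path_rev p)) (path_class X p) = path_class X (\<lambda>x. p 1)"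
  by (simp only: pc_join[symmetric] pathin_rev rev_1) (rule pc_eq, rule ph_linv)

lemma c_lid[simp]: "is_cls X B \<Longrightarrow> src B = a \<Longrightarrow> cmul X (path_class X (\<lambda>x. a)) B = B"
proof (erule is_clsE)
  fix p assume p: "pathin X p" "B = path_class X p" and a: "src B = a"
  then have a': "a = p 0" by simp
  have "cmul X (path_class X (\<lambda>x. a)) B = path_class X ((\<lambda>x. a) \<star> p)"
    using p a' path_start_in_topspace[OF p(1)] by (simp only: pc_join[symmetric] pathin_const)
  also have "\<dots> = B" using p(2) by (simp only:) (rule pc_eq, rule ph_lid[OF p(1) a'])
  finally show ?thesis .
qed
lemma c_rid[simp]: "is_cls X A \<Longrightarrow> tgt A = a \<Longrightarrow> cmul X A (path_class X (\<lambda>x. a)) = A"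
proof (erule is_clsE)
  fix p assume p: "pathin X p" "A = path_class X p" and a: "tgt A = a"
  then have a': "a = p 1" by simp
  have "cmul X A (path_class X (\<lambda>x. a)) = path_class X (p \<star> (\<lambda>x. a))"
    using p a' path_finish_in_topspace[OF p(1)] by (simp only: pc_join[symmetric] pathin_const)
  also have "\<dots> = A" using p(2) by (simp only:) (rule pc_eq, rule ph_rid[OF p(1) a'])
  finally show ?thesis .
qed

lemma c_rinv2[simp]:
  assumes "pathin X p" "is_cls X B" "src B = p 0"
  shows "cmul X (path_class X p) (cmul X (path_class X (path_rev p)) B) = B"
proof -
  have "cmul X (path_class X p) (cmul X (path_class X (path_rev p)) B) =
        cmul X (cmul X (path_class X p) (path_class X (path_rev p))) B"
    by (rule cmul_assoc[symmetric]) (use assms in auto)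
  also have "\<dots> = B" using assms by (simp add: path_start_in_topspace)
  finally show ?thesis .
qed

lemma c_linv2[simp]:
  assumes "pathin X p" "is_cls X B" "src B = p 1"
  shows "cmul X (path_class X (path_rev p)) (cmul X (path_class X p) B) = B"
proof -
  have "cmul X (path_class X (path_rev p)) (cmul X (path_class X p) B) =
        cmul X (cmul X (path_class X (path_rev p)) (path_class X p)) B"
    by (rule cmul_assoc[symmetric]) (use assms in auto)
  also have "\<dots> = B" using assms by (simp add: path_finish_in_topspace)
  finally show ?thesis .
qed

lemma c_sp[simp]:
  assumes "pathin X f" "a \<in> {0..1}" "b \<in> {0..1}" "c \<in> {0..1}"
  shows "cmul X (path_class X (sp a b f)) (path_class X (sp b c f)) = path_class X (sp a c f)"
proof -
  have "cmul X (path_class X (sp a b f)) (path_class X (sp b c f)) = path_class X (sp a b f \<star> sp b c f)"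
    using assms by (simp only: pc_join[symmetric] pathin_sp sp_0 sp_1)
  also have "\<dots> = path_class X (sp a c f)" by (rule pc_eq, rule ph_sp) (use assms in auto)
  finally show ?thesis .
qed

lemma c_sp2[simp]:
  assumes "pathin X f" "a \<in> {0..1}" "b \<in> {0..1}" "c \<in> {0..1}" "is_cls X B" "src B = f c"
  shows "cmul X (path_class X (sp a b f)) (cmul X (path_class X (sp b c f)) B) = cmul X (path_class X (sp a c f)) B"
proof -
  have "cmul X (path_class X (sp a b f)) (cmul X (path_class X (sp b c f)) B) =
        cmul X (cmul X (path_class X (sp a b f)) (path_class X (sp b c f))) B"
    by (rule cmul_assoc[symmetric]) (use assms in auto)
  also have "\<dots> = cmul X (path_class X (sp a c f)) B" using assms by simp
  finally show ?thesis .
qed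

lemmas [simp] = pc_join

lemma openin_qtop:
  "openin (pi1_qtop X x0) A \<longleftrightarrow> A \<subseteq> pi1 X x0 \<and>
     openin (compact_open_loops X x0) {g \<in> loops X x0. path_class X g \<in> A}"
proof -
  have "istopology (\<lambda>A. A \<subseteq> pi1 X x0 \<and> openin (compact_open_loops X x0) {g \<in> loops X x0. path_class X g \<in> A})"
  proof -
    have e1: "\<And>S T. {g \<in> loops X x0. path_class X g \<in> S \<inter> T} = {g \<in> loops X x0. path_class X g \<in> S} \<inter> {g \<in> loops X x0. path_class X g \<in> T}"
      by auto
    have e2: "\<And>K. {g \<in> loops X x0. path_class X g \<in> \<Union>K} = (\<Union>S\<in>K. {g \<in> loops X x0. path_class X g \<in> S})"
      by auto
    show ?thesis unfolding istopology_def e1 e2 by (auto intro!: openin_Int openin_Union)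
  qed
  then show ?thesis unfolding pi1_qtop_def by simp
qed

lemma COL_topspace: "topspace (compact_open_loops X x0) = loops X x0"
proof -
  have "loops X x0 = {g \<in> loops X x0. g ` {} \<subseteq> topspace X}" by simp
  then have "loops X x0 \<in> {{g \<in> loops X x0. g ` K \<subseteq> U} | K U. compact K \<and> K \<subseteq> {0..1} \<and> openin X U}"
    by blast
  then show ?thesis unfolding compact_open_loops_def topology_generated_by_topspace by blast
qed

lemma COL_basic: "compact K \<Longrightarrow> K \<subseteq> {0..1} \<Longrightarrow> openin X U \<Longrightarrow>
   openin (compact_open_loops X x0) {g \<in> loops X x0. g ` K \<subseteq> U}"
  unfolding compact_open_loops_def by (rule topology_generated_by_Basis) blast

lemma fg_mult: "mult (fundamental_group X x0) A B = cmul X A B"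
  by (simp add: fundamental_group_def cmul_def)
lemma fg_one: "one (fundamental_group X x0) = path_class X (\<lambda>x. x0)"
  by (simp add: fundamental_group_def)
lemma fg_carrier: "carrier (fundamental_group X x0) = pi1 X x0"
  by (simp add: fundamental_group_def)

lemma H_mul: "subgroup H (fundamental_group X x0) \<Longrightarrow> A \<in> H \<Longrightarrow> B \<in> H \<Longrightarrow> cmul X A B \<in> H"
  using subgroup.m_closed[of H "fundamental_group X x0" A B] by (simp add: fg_mult)
lemma H_one: "subgroup H (fundamental_group X x0) \<Longrightarrow> path_class X (\<lambda>x. x0) \<in> H"
  using subgroup.one_closed[of H "fundamental_group X x0"] by (simp add: fg_one)

lemma loopsD: "g \<in> loops X x0 \<Longrightarrow> pathin X g \<and> g 0 = x0 \<and> g 1 = x0"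
  by (simp add: loops_def)

lemma gen_induct:
  assumes a: "pathin X \<alpha>" "\<alpha> 0 = x0"
    and N: "generate_topology_on {{g \<in> loops X x0. g ` K \<subseteq> U} | K U. compact K \<and> K \<subseteq> {0..1} \<and> openin X U} N"
  shows "\<alpha> \<star> ((\<lambda>x. \<alpha> 1) \<star> path_rev \<alpha>) \<in> N \<Longrightarrow> \<exists>U. openin X U \<and> \<alpha> 1 \<in> U \<and>
     (\<forall>\<gamma>. pathin (subtopology X U) \<gamma> \<and> \<gamma> 0 = \<alpha> 1 \<and> \<gamma> 1 = \<alpha> 1 \<longrightarrow> \<alpha> \<star> (\<gamma> \<star> path_rev \<alpha>) \<in> N)"
  using N
proof induct
  case Empty then show ?case by simp
next
  case (Int a b)
  then obtain U1 U2 where "openin X U1" "\<alpha> 1 \<in> U1" "\<forall>\<gamma>. pathin (subtopology X U1) \<gamma> \<and> \<gamma> 0 = \<alpha> 1 \<and> \<gamma> 1 = \<alpha> 1 \<longrightarrow> \<alpha> \<star> (\<gamma> \<star> path_rev \<alpha>) \<in> a"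
     "openin X U2" "\<alpha> 1 \<in> U2" "\<forall>\<gamma>. pathin (subtopology X U2) \<gamma> \<and> \<gamma> 0 = \<alpha> 1 \<and> \<gamma> 1 = \<alpha> 1 \<longrightarrow> \<alpha> \<star> (\<gamma> \<star> path_rev \<alpha>) \<in> b"
    by auto
  then show ?case
    by (intro exI[where x="U1 \<inter> U2"]) (auto simp: pathin_subtopology)
next
  case (UN K)
  then obtain k where "k \<in> K" "\<alpha> \<star> ((\<lambda>x. \<alpha> 1) \<star> path_rev \<alpha>) \<in> k" by auto
  with UN obtain U where "openin X U" "\<alpha> 1 \<in> U" "\<forall>\<gamma>. pathin (subtopology X U) \<gamma> \<and> \<gamma> 0 = \<alpha> 1 \<and> \<gamma> 1 = \<alpha> 1 \<longrightarrow> \<alpha> \<star> (\<gamma> \<star> path_rev \<alpha>) \<in> k"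
    by blast
  with \<open>k \<in> K\<close> show ?case by blast
next
  case (Basis s)
  then obtain K V where s: "s = {g \<in> loops X x0. g ` K \<subseteq> V}" and K: "compact K" "K \<subseteq> {0..1}" and V: "openin X V"
    by blast
  define U where "U = (if \<alpha> 1 \<in> V then V else topspace X)"
  have a1: "\<alpha> 1 \<in> topspace X" using path_finish_in_topspace[OF a(1)] .
  have c: "(\<alpha> \<star> ((\<lambda>x. \<alpha> 1) \<star> path_rev \<alpha>)) ` K \<subseteq> V" using Basis(2) s by auto
  show ?case
  proof (intro exI[where x=U] conjI allI impI)
    show "openin X U" using V by (simp add: U_def)
    show "\<alpha> 1 \<in> U" using a1 by (simp add: U_def)
    fix \<gamma> assume g: "pathin (subtopology X U) \<gamma> \<and> \<gamma> 0 = \<alpha> 1 \<and> \<gamma> 1 = \<alpha> 1"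
    then have gX: "pathin X \<gamma>" and gU: "\<And>x. x \<in> {0..1} \<Longrightarrow> \<gamma> x \<in> U" by (auto simp: pathin_subtopology)
    have "\<alpha> \<star> (\<gamma> \<star> path_rev \<alpha>) \<in> loops X x0"
      using g gX a by (simp add: loops_def pathin_join pathin_rev)
    moreover have "(\<alpha> \<star> (\<gamma> \<star> path_rev \<alpha>)) ` K \<subseteq> V"
    proof
      fix y assume "y \<in> (\<alpha> \<star> (\<gamma> \<star> path_rev \<alpha>)) ` K"
      then obtain k where k: "k \<in> K" "y = (\<alpha> \<star> (\<gamma> \<star> path_rev \<alpha>)) k" by auto
      have ck: "(\<alpha> \<star> ((\<lambda>x. \<alpha> 1) \<star> path_rev \<alpha>)) k \<in> V" using c k by auto
      have k01: "k \<in> {0..1}" using K k by auto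
      show "y \<in> V"
      proof (cases "k \<le> 1/2")
        case True then show ?thesis using ck k by (simp add: path_join_def)
      next
        case F: False
        show ?thesis
        proof (cases "2 * k - 1 \<le> 1/2")
          case True
          then have "\<alpha> 1 \<in> V" using ck F by (simp add: path_join_def)
          then have "U = V" by (simp add: U_def)
          moreover have "2 * (2 * k - 1) \<in> {0..1}" using True F by auto
          ultimately show ?thesis using gU k True F by (simp add: path_join_def)
        next
          case False then show ?thesis using ck k F by (simp add: path_join_def)
        qed
      qed
    qed
    ultimately show "\<alpha> \<star> (\<gamma> \<star> path_rev \<alpha>) \<in> s" using s by simp
  qed
qed

lemma open_imp_semilocal:
  assumes x0: "x0 \<in> topspace X" and sg: "subgroup H (fundamental_group X x0)"
    and op: "openin (pi1_qtop X x0) H"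
  shows "semilocally_path_H_connected X x0 H"
  unfolding semilocally_path_H_connected_def
proof (intro allI impI)
  fix \<alpha> assume a: "pathin X \<alpha> \<and> \<alpha> 0 = x0"
  let ?P = "{g \<in> loops X x0. path_class X g \<in> H}"
  have "openin (compact_open_loops X x0) ?P" using op by (simp add: openin_qtop)
  then have gen: "generate_topology_on {{g \<in> loops X x0. g ` K \<subseteq> U} | K U. compact K \<and> K \<subseteq> {0..1} \<and> openin X U} ?P"
    unfolding compact_open_loops_def openin_topology_generated_by_iff .
  have a1: "\<alpha> 1 \<in> topspace X" using path_finish_in_topspace a by blast
  have "\<alpha> \<star> ((\<lambda>x. \<alpha> 1) \<star> path_rev \<alpha>) \<in> loops X x0"
    using a a1 by (simp add: loops_def)
  moreover have "path_class X (\<alpha> \<star> ((\<lambda>x. \<alpha> 1) \<star> path_rev \<alpha>)) = path_class X (\<lambda>x. x0)"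
    using a a1 by simp
  ultimately have "\<alpha> \<star> ((\<lambda>x. \<alpha> 1) \<star> path_rev \<alpha>) \<in> ?P" using H_one[OF sg] by simp
  from gen_induct[OF _ _ gen this] a obtain U where U: "openin X U" "\<alpha> 1 \<in> U"
     "\<forall>\<gamma>. pathin (subtopology X U) \<gamma> \<and> \<gamma> 0 = \<alpha> 1 \<and> \<gamma> 1 = \<alpha> 1 \<longrightarrow> \<alpha> \<star> (\<gamma> \<star> path_rev \<alpha>) \<in> ?P"
    by blast
  show "\<exists>U. openin X U \<and> \<alpha> 1 \<in> U \<and>
        (\<forall>\<gamma>. pathin (subtopology X U) \<gamma> \<and> \<gamma> 0 = \<alpha> 1 \<and> \<gamma> 1 = \<alpha> 1 \<longrightarrow>
          (\<exists>\<delta>\<in>loops X x0. path_class X \<delta> \<in> H \<and>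
             path_class X \<gamma> = path_class X (path_rev \<alpha> \<star> (\<delta> \<star> \<alpha>))))"
  proof (intro exI[where x=U] conjI allI impI U(1,2))
    fix \<gamma> assume g: "pathin (subtopology X U) \<gamma> \<and> \<gamma> 0 = \<alpha> 1 \<and> \<gamma> 1 = \<alpha> 1"
    then have gX: "pathin X \<gamma>" by (simp add: pathin_subtopology)
    have "\<alpha> \<star> (\<gamma> \<star> path_rev \<alpha>) \<in> ?P" using U(3) g by blast
    moreover have "path_class X \<gamma> = path_class X (path_rev \<alpha> \<star> ((\<alpha> \<star> (\<gamma> \<star> path_rev \<alpha>)) \<star> \<alpha>))"
      using a g gX by simp
    ultimately show "\<exists>\<delta>\<in>loops X x0. path_class X \<delta> \<in> H \<and>
             path_class X \<gamma> = path_class X (path_rev \<alpha> \<star> (\<delta> \<star> \<alpha>))" by blast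
  qed
qed

lemma sp_between:
  fixes a b x :: real
  assumes "x \<in> {0..1}"
  shows "(b - a) * x + a \<in> {min a b..max a b}"
proof (cases "a \<le> b")
  case True
  have "(b - a) * x \<le> (b - a) * 1" using assms True by (intro mult_left_mono) auto
  moreover have "0 \<le> (b - a) * x" using assms True by auto
  ultimately show ?thesis using True by auto
next
  case False
  have "(a - b) * x \<le> (a - b) * 1" using assms False by (intro mult_left_mono) auto
  moreover have "0 \<le> (a - b) * x" using assms False by auto
  ultimately show ?thesis using False by (auto simp: algebra_simps)
qed

lemma pathin_sp_sub:
  assumes "pathin X p" "a \<in> {0..1}" "b \<in> {0..1}" "\<And>r. r \<in> {min a b..max a b} \<Longrightarrow> p r \<in> U"
  shows "pathin (subtopology X U) (sp a b p)"
proof -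
  have "pathin X (sp a b p)" using assms by simp
  moreover have "\<forall>x\<in>{0..1}. sp a b p x \<in> U"
    using assms(4) sp_between by (simp add: sp_def)
  ultimately show ?thesis by (simp add: pathin_subtopology)
qed

lemma real_induct01:
  assumes P0: "P (0::real)"
    and loc: "\<And>t. t \<in> {0..1} \<Longrightarrow> \<exists>e>0. \<forall>s s'. s \<in> {0..1} \<longrightarrow> s' \<in> {0..1} \<longrightarrow> \<bar>s - t\<bar> < e \<longrightarrow> \<bar>s' - t\<bar> < e \<longrightarrow> P s \<longrightarrow> P s'"
  shows "\<And>t. t \<in> {0..1} \<Longrightarrow> P t"
proof -
  let ?S = "{0..1::real}"
  let ?T = "{t \<in> ?S. P t}"
  have op: "openin (top_of_set ?S) ?T"
    unfolding openin_euclidean_subtopology_iff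
  proof (intro conjI ballI)
    fix x assume x: "x \<in> ?T"
    then obtain e where e: "e > 0" "\<forall>s s'. s \<in> ?S \<longrightarrow> s' \<in> ?S \<longrightarrow> \<bar>s - x\<bar> < e \<longrightarrow> \<bar>s' - x\<bar> < e \<longrightarrow> P s \<longrightarrow> P s'"
      using loc by blast
    show "\<exists>e>0. \<forall>x'\<in>?S. dist x' x < e \<longrightarrow> x' \<in> ?T"
    proof (intro exI[where x=e] conjI ballI impI)
      fix x' assume "x' \<in> ?S" "dist x' x < e"
      then have "\<bar>x' - x\<bar> < e" by (simp add: dist_real_def)
      then have "P x'" using e(1) e(2)[rule_format, of x x'] x \<open>x' \<in> ?S\<close> by simp
      then show "x' \<in> ?T" using \<open>x' \<in> ?S\<close> by simp
    qed (rule e(1))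
  qed blast
  have op2: "openin (top_of_set ?S) (?S - ?T)"
    unfolding openin_euclidean_subtopology_iff
  proof (intro conjI ballI)
    fix x assume x: "x \<in> ?S - ?T"
    then obtain e where e: "e > 0" "\<forall>s s'. s \<in> ?S \<longrightarrow> s' \<in> ?S \<longrightarrow> \<bar>s - x\<bar> < e \<longrightarrow> \<bar>s' - x\<bar> < e \<longrightarrow> P s \<longrightarrow> P s'"
      using loc by blast
    show "\<exists>e>0. \<forall>x'\<in>?S. dist x' x < e \<longrightarrow> x' \<in> ?S - ?T"
    proof (intro exI[where x=e] conjI ballI impI)
      fix x' assume "x' \<in> ?S" "dist x' x < e"
      then have "\<bar>x' - x\<bar> < e" by (simp add: dist_real_def)
      then have "\<not> P x'" using e(1) e(2)[rule_format, of x' x] x \<open>x' \<in> ?S\<close> by auto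
      then show "x' \<in> ?S - ?T" using \<open>x' \<in> ?S\<close> by simp
    qed (rule e(1))
  qed blast
  have cl: "closedin (top_of_set ?S) ?T"
    using op2 by (simp add: closedin_def) auto
  have "?T = {} \<or> ?T = ?S"
    using connected_clopen[THEN iffD1, OF connected_Icc] op cl by blast
  then have "?T = ?S" using P0 by auto
  then show "\<And>t. t \<in> ?S \<Longrightarrow> P t" by blast
qed

definition Rp :: "'a topology \<Rightarrow> 'a \<Rightarrow> (real \<Rightarrow> 'a) set set \<Rightarrow> (real \<Rightarrow> 'a) \<Rightarrow> real \<Rightarrow> bool"
  where "Rp X x0 H f t \<longleftrightarrow> (\<exists>N W. openin (compact_open_loops X x0) N \<and> f \<in> N \<and> openin X W \<and> f t \<in> W \<and>
     (\<forall>g\<in>N. g t \<in> W \<and> (\<forall>\<beta>. pathin (subtopology X W) \<beta> \<and> \<beta> 0 = g t \<and> \<beta> 1 = f t \<longrightarrow>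
        path_class X ((sp 0 t g \<star> \<beta>) \<star> path_rev (sp 0 t f)) \<in> H)))"

context
  fixes X :: "'a topology" and x0 :: 'a and H and f
  assumes lpc: "locally_path_connected_space X" and x0: "x0 \<in> topspace X"
   and sg: "subgroup H (fundamental_group X x0)" and SL: "semilocally_path_H_connected X x0 H"
   and f: "f \<in> loops X x0" "path_class X f \<in> H"
begin

lemma fX: "pathin X f" "f 0 = x0" "f 1 = x0" using f by (auto simp: loops_def)

lemma E4:
  assumes t: "t \<in> {0..1}" and s: "s \<in> {0..1}"
    and Uprop: "\<forall>\<gamma>. pathin (subtopology X U) \<gamma> \<and> \<gamma> 0 = f t \<and> \<gamma> 1 = f t \<longrightarrow>
        (\<exists>\<delta>\<in>loops X x0. path_class X \<delta> \<in> H \<and> path_class X \<gamma> = path_class X (path_rev (sp 0 t f) \<star> (\<delta> \<star> sp 0 t f)))"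
    and sig: "pathin (subtopology X U) (sp t s f)"
    and L: "pathin (subtopology X U) L" "L 0 = f s" "L 1 = f s"
  shows "path_class X ((sp 0 s f \<star> L) \<star> path_rev (sp 0 s f)) \<in> H"
proof -
  define \<gamma> where "\<gamma> = sp t s f \<star> (L \<star> path_rev (sp t s f))"
  have g: "pathin (subtopology X U) \<gamma>" "\<gamma> 0 = f t" "\<gamma> 1 = f t"
  proof -
    have "pathin (subtopology X U) (sp s t f)" using pathin_rev[OF sig] by simp
    then show "pathin (subtopology X U) \<gamma>" "\<gamma> 0 = f t" "\<gamma> 1 = f t"
      using sig L by (simp_all add: \<gamma>_def pathin_join pathin_rev)
  qed
  then obtain \<delta> where d: "\<delta> \<in> loops X x0" "path_class X \<delta> \<in> H"
    "path_class X \<gamma> = path_class X (path_rev (sp 0 t f) \<star> (\<delta> \<star> sp 0 t f))"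
    using Uprop by blast
  have LX: "pathin X L" using L by (simp add: pathin_subtopology)
  have gX: "pathin X \<gamma>" using g by (simp add: pathin_subtopology)
  have dX: "pathin X \<delta>" "\<delta> 0 = x0" "\<delta> 1 = x0" using d(1) by (auto simp: loops_def)
  have "path_class X ((sp 0 s f \<star> L) \<star> path_rev (sp 0 s f)) =
        cmul X (path_class X (sp 0 t f)) (cmul X (path_class X \<gamma>) (path_class X (path_rev (sp 0 t f))))"
    unfolding \<gamma>_def using fX t s LX L by simp
  also have "\<dots> = cmul X (path_class X (sp 0 t f)) (cmul X (path_class X (path_rev (sp 0 t f) \<star> (\<delta> \<star> sp 0 t f))) (path_class X (path_rev (sp 0 t f))))"
    by (simp only: d(3))
  also have "\<dots> = path_class X \<delta>"
    using fX t dX by simp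
  finally show ?thesis using d(2) by simp
qed

lemma transfer:
  assumes t: "t \<in> {0..1}"
  shows "\<exists>e>0. \<forall>s s'. s \<in> {0..1} \<longrightarrow> s' \<in> {0..1} \<longrightarrow> \<bar>s - t\<bar> < e \<longrightarrow> \<bar>s' - t\<bar> < e \<longrightarrow>
           Rp X x0 H f s \<longrightarrow> Rp X x0 H f s'"
proof -
  have aX: "pathin X (sp 0 t f)" "sp 0 t f 0 = x0" using fX t by simp_all
  obtain U where U: "openin X U" "f t \<in> U"
    and Uprop: "\<forall>\<gamma>. pathin (subtopology X U) \<gamma> \<and> \<gamma> 0 = f t \<and> \<gamma> 1 = f t \<longrightarrow>
        (\<exists>\<delta>\<in>loops X x0. path_class X \<delta> \<in> H \<and> path_class X \<gamma> = path_class X (path_rev (sp 0 t f) \<star> (\<delta> \<star> sp 0 t f)))"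
    using SL aX unfolding semilocally_path_H_connected_def by (metis sp_1)
  have "openin (top_of_set {0..1}) {r \<in> topspace (top_of_set {0..1::real}). f r \<in> U}"
    by (rule openin_continuous_map_preimage) (use fX U in \<open>simp_all add: pathin_def\<close>)
  then have "openin (top_of_set {0..1}) {r \<in> {0..1::real}. f r \<in> U}" by simp
  then obtain e where e: "e > 0" "\<And>r. r \<in> {0..1} \<Longrightarrow> dist r t < e \<Longrightarrow> f r \<in> U"
    unfolding openin_euclidean_subtopology_iff using t U(2) by blast
  have fU: "\<And>r. r \<in> {0..1} \<Longrightarrow> \<bar>r - t\<bar> < e \<Longrightarrow> f r \<in> U" using e(2) by (simp add: dist_real_def)
  show ?thesis
  proof (intro exI[where x=e] conjI allI impI e(1))
    fix s s' assume s: "s \<in> {0..1}" and s': "s' \<in> {0..1}" and st: "\<bar>s - t\<bar> < e" and st': "\<bar>s' - t\<bar> < e"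
      and R: "Rp X x0 H f s"
    obtain N W where N: "openin (compact_open_loops X x0) N" "f \<in> N" and W: "openin X W" "f s \<in> W"
      and NW: "\<forall>g\<in>N. g s \<in> W \<and> (\<forall>\<beta>. pathin (subtopology X W) \<beta> \<and> \<beta> 0 = g s \<and> \<beta> 1 = f s \<longrightarrow>
        path_class X ((sp 0 s g \<star> \<beta>) \<star> path_rev (sp 0 s f)) \<in> H)"
      using R unfolding Rp_def by blast
    define Wc where "Wc = Collect (path_component_of (subtopology X (W \<inter> U)) (f s))"
    have WU: "openin X (W \<inter> U)" using W U by auto
    have Wc_open: "openin X Wc"
      unfolding Wc_def
      by (rule openin_trans_full[OF openin_path_component_of_locally_path_connected_space WU])
         (rule locally_path_connected_space_open_subset[OF lpc WU])
    define K where "K = {min s s'..max s s'}"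
    have K01: "K \<subseteq> {0..1}" using s s' by (auto simp: K_def)
    have Kt: "\<And>r. r \<in> K \<Longrightarrow> \<bar>r - t\<bar> < e" using st st' by (auto simp: K_def)
    define N' where "N' = N \<inter> {g \<in> loops X x0. g ` {s} \<subseteq> Wc} \<inter> {g \<in> loops X x0. g ` K \<subseteq> U}"
    have fsU: "f s \<in> U" using fU s st by blast
    have fs_top: "f s \<in> topspace X" using fX s path_image_subset_topspace by blast
    show "Rp X x0 H f s'"
      unfolding Rp_def
    proof (intro exI[where x=N'] exI[where x=U] conjI ballI allI impI U(1))
      show "openin (compact_open_loops X x0) N'"
        unfolding N'_def using s K01 Wc_open U(1)
        by (intro openin_Int N COL_basic) (auto simp: K_def)
      have "f s \<in> Wc" unfolding Wc_def using fs_top W fsU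
        by (simp add: path_component_of_refl)
      moreover have "f ` K \<subseteq> U" using fU Kt K01 by blast
      ultimately show "f \<in> N'" unfolding N'_def using N(2) f(1) by simp
      show "f s' \<in> U" using fU s' st' by blast
    next
      fix g assume g: "g \<in> N'"
      have gs'K: "s' \<in> K" by (simp add: K_def)
      then show "g s' \<in> U" using g by (auto simp: N'_def)
    next
      fix g \<beta>' assume g: "g \<in> N'" and b': "pathin (subtopology X U) \<beta>' \<and> \<beta>' 0 = g s' \<and> \<beta>' 1 = f s'"
      have gl: "g \<in> loops X x0" "g \<in> N" "g s \<in> Wc" "g ` K \<subseteq> U" using g by (auto simp: N'_def)
      have gX: "pathin X g" "g 0 = x0" "g 1 = x0" using gl(1) by (auto simp: loops_def)
      obtain h where h: "pathin (subtopology X (W \<inter> U)) h" "h 0 = f s" "h 1 = g s"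
        using gl(3) unfolding Wc_def path_component_of_def by blast
      define \<beta> where "\<beta> = path_rev h"
      have bWU: "pathin (subtopology X (W \<inter> U)) \<beta>" "\<beta> 0 = g s" "\<beta> 1 = f s"
        using h by (simp_all add: \<beta>_def pathin_rev)
      have bX: "pathin X \<beta>" and bW: "pathin (subtopology X W) \<beta>" and bU: "pathin (subtopology X U) \<beta>"
        using bWU(1) by (auto simp: pathin_subtopology)
      have A: "path_class X ((sp 0 s g \<star> \<beta>) \<star> path_rev (sp 0 s f)) \<in> H"
        using NW gl(2) bW bWU by blast
      have b'X: "pathin X \<beta>'" using b' by (simp add: pathin_subtopology)
      define L where "L = ((path_rev \<beta> \<star> sp s s' g) \<star> \<beta>') \<star> sp s' s f"
      have spg: "pathin (subtopology X U) (sp s s' g)"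
        by (rule pathin_sp_sub[OF gX(1) s s']) (use gl(4) in \<open>auto simp: K_def\<close>)
      have spf: "pathin (subtopology X U) (sp s' s f)"
      proof (rule pathin_sp_sub[OF fX(1) s' s])
        fix r assume r: "r \<in> {min s' s..max s' s}"
        then have "r \<in> K" by (auto simp: K_def)
        then show "f r \<in> U" using fU Kt K01 by blast
      qed
      have sig: "pathin (subtopology X U) (sp t s f)"
      proof (rule pathin_sp_sub[OF fX(1) t s])
        fix r assume r: "r \<in> {min t s..max t s}"
        then have "r \<in> {0..1}" "\<bar>r - t\<bar> < e" using t s st by auto
        then show "f r \<in> U" using fU by blast
      qed
      have LU: "pathin (subtopology X U) L" "L 0 = f s" "L 1 = f s"
        using bU bWU spg spf b' by (simp_all add: L_def pathin_join pathin_rev)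
      have B: "path_class X ((sp 0 s f \<star> L) \<star> path_rev (sp 0 s f)) \<in> H"
        by (rule E4[OF t s Uprop sig LU])
      have "path_class X ((sp 0 s' g \<star> \<beta>') \<star> path_rev (sp 0 s' f)) =
            cmul X (path_class X ((sp 0 s g \<star> \<beta>) \<star> path_rev (sp 0 s f)))
                   (path_class X ((sp 0 s f \<star> L) \<star> path_rev (sp 0 s f)))"
        unfolding L_def using fX gX s s' bX bWU b'X b' by simp
      then show "path_class X ((sp 0 s' g \<star> \<beta>') \<star> path_rev (sp 0 s' f)) \<in> H"
        using H_mul[OF sg A B] by simp
    qed
  qed
qed

lemma base: "Rp X x0 H f 0"
proof -
  have cX: "pathin X (\<lambda>x. x0)" using x0 by simp
  obtain U where U: "openin X U" "x0 \<in> U"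
    and Uprop: "\<forall>\<gamma>. pathin (subtopology X U) \<gamma> \<and> \<gamma> 0 = x0 \<and> \<gamma> 1 = x0 \<longrightarrow>
        (\<exists>\<delta>\<in>loops X x0. path_class X \<delta> \<in> H \<and> path_class X \<gamma> = path_class X (path_rev (\<lambda>x. x0) \<star> (\<delta> \<star> (\<lambda>x. x0))))"
  proof -
    have "pathin X (\<lambda>x. x0) \<and> (\<lambda>x::real. x0) 0 = x0" using cX by simp
    from SL[unfolded semilocally_path_H_connected_def, rule_format, OF this] that show ?thesis by blast
  qed
  show ?thesis
    unfolding Rp_def
  proof (intro exI[where x="loops X x0"] exI[where x=U] conjI ballI allI impI U(1))
    show "openin (compact_open_loops X x0) (loops X x0)"
      using openin_topspace[of "compact_open_loops X x0"] by (simp add: COL_topspace)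
    show "f \<in> loops X x0" by (rule f(1))
    show "f 0 \<in> U" using fX U by simp
  next
    fix g assume "g \<in> loops X x0" then show "g 0 \<in> U" using U by (simp add: loops_def)
  next
    fix g \<beta> assume g: "g \<in> loops X x0" and b: "pathin (subtopology X U) \<beta> \<and> \<beta> 0 = g 0 \<and> \<beta> 1 = f 0"
    have gX: "pathin X g" "g 0 = x0" "g 1 = x0" using g by (auto simp: loops_def)
    have b0: "\<beta> 0 = x0" "\<beta> 1 = x0" using b gX fX by auto
    have bX: "pathin X \<beta>" using b by (simp add: pathin_subtopology)
    obtain \<delta> where d: "\<delta> \<in> loops X x0" "path_class X \<delta> \<in> H"
      "path_class X \<beta> = path_class X (path_rev (\<lambda>x. x0) \<star> (\<delta> \<star> (\<lambda>x. x0)))"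
      using Uprop b b0 by blast
    have dX: "pathin X \<delta>" "\<delta> 0 = x0" "\<delta> 1 = x0" using d(1) by (auto simp: loops_def)
    have "path_class X ((sp 0 0 g \<star> \<beta>) \<star> path_rev (sp 0 0 f)) = path_class X \<beta>"
      using gX fX bX b0 x0 by simp
    also have "\<dots> = path_class X \<delta>" using d(3) dX x0 by simp
    finally show "path_class X ((sp 0 0 g \<star> \<beta>) \<star> path_rev (sp 0 0 f)) \<in> H" using d(2) by simp
  qed
qed

lemma local_open: "\<exists>T. openin (compact_open_loops X x0) T \<and> f \<in> T \<and> T \<subseteq> {g \<in> loops X x0. path_class X g \<in> H}"
proof -
  have "Rp X x0 H f 1"
    by (rule real_induct01[where P="Rp X x0 H f", OF base transfer]) simp_all
  then obtain N W where N: "openin (compact_open_loops X x0) N" "f \<in> N" and W: "openin X W" "f 1 \<in> W"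
      and NW: "\<forall>g\<in>N. g 1 \<in> W \<and> (\<forall>\<beta>. pathin (subtopology X W) \<beta> \<and> \<beta> 0 = g 1 \<and> \<beta> 1 = f 1 \<longrightarrow>
        path_class X ((sp 0 1 g \<star> \<beta>) \<star> path_rev (sp 0 1 f)) \<in> H)"
    unfolding Rp_def by blast
  show ?thesis
  proof (intro exI[where x=N] conjI N subsetI)
    fix g assume g: "g \<in> N"
    then have gl: "g \<in> loops X x0" using openin_subset[OF N(1)] by (auto simp: COL_topspace)
    then have gX: "pathin X g" "g 0 = x0" "g 1 = x0" by (auto simp: loops_def)
    have x0W: "x0 \<in> W" using W fX by simp
    have h: "\<forall>\<beta>. pathin (subtopology X W) \<beta> \<and> \<beta> 0 = g 1 \<and> \<beta> 1 = f 1 \<longrightarrow>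
        path_class X ((sp 0 1 g \<star> \<beta>) \<star> path_rev (sp 0 1 f)) \<in> H" using NW g by blast
    have "pathin (subtopology X W) (\<lambda>x. x0) \<and> (\<lambda>x. x0) 0 = g 1 \<and> (\<lambda>x::real. x0) 1 = f 1"
      using x0W x0 gX fX by (simp add: pathin_subtopology)
    from h[rule_format, OF this]
    have A: "path_class X ((sp 0 1 g \<star> (\<lambda>x. x0)) \<star> path_rev (sp 0 1 f)) \<in> H" .
    have eq: "cmul X (path_class X ((sp 0 1 g \<star> (\<lambda>x. x0)) \<star> path_rev (sp 0 1 f))) (path_class X f) = path_class X g"
      using gX fX x0 by simp
    have "path_class X g \<in> H" using H_mul[OF sg A f(2)] unfolding eq .
    then show "g \<in> {g \<in> loops X x0. path_class X g \<in> H}" using gl by simp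
  qed
qed

end

lemma semilocal_imp_open:
  assumes lpc: "locally_path_connected_space X" and x0: "x0 \<in> topspace X"
   and sg: "subgroup H (fundamental_group X x0)" and SL: "semilocally_path_H_connected X x0 H"
  shows "openin (pi1_qtop X x0) H"
proof -
  have "H \<subseteq> pi1 X x0" using subgroup.subset[OF sg] by (simp add: fg_carrier)
  moreover have "openin (compact_open_loops X x0) {g \<in> loops X x0. path_class X g \<in> H}"
    by (subst openin_subopen) (use local_open[OF lpc x0 sg SL] in blast)
  ultimately show ?thesis by (simp add: openin_qtop)
qed

theorem proposition4p3:
  fixes X :: "'a topology" and x0 :: 'a and H :: "(real \<Rightarrow> 'a) set set"
  assumes "connected_space X" and "locally_path_connected_space X"
    and "x0 \<in> topspace X"
    and "subgroup H (fundamental_group X x0)"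
  shows "semilocally_path_H_connected X x0 H \<longleftrightarrow> openin (pi1_qtop X x0) H"
  using semilocal_imp_open[OF assms(2,3,4)] open_imp_semilocal[OF assms(3,4)] by blast

end
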